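(* Let $N\ge1$, $s\ge2$ be integers, $\epsilon=1/N$, $F>0$, and let $\phi:(0,\infty)\to\mathbb R$ be twice differentiable with $\phi''_{kF}:=\phi''(kF)$. Suppose $\phi''_{kF}\le0$ for $k=2,\dots,s$. Call $\mathbf y_F$ a stable equilibrium of the $s$th-nearest-neighbour atomistic model if $$\epsilon\sum_{\ell=-N+1}^{N}\sum_{k=1}^{s}\phi''_{kF}\Big(\sum_{j=0}^{k-1}u'_{\ell+j}\Big)^2>0\quad\text{for all }\mathbf u\in\mathcal U\setminus\{\mathbf 0\}.$$ Then there exists a constant $B=B_F$ satisfying $$\sum_{k=2}^{s}(k-1)\phi''_{kF}\ \ge\ B_F\ \ge\ \phi''_{2F}+\sum_{k=3}^{s}\frac{k^4-k^2}{12}\phi''_{kF}$$ such that $\mathbf y_F$ is a stable equilibrium of the atomistic model if and only if $A^s_F-\epsilon^2\mu_\epsilon^2B_F>0$, where $A^s_F:=\sum_{k=1}^{s}k^2\phi''_{kF}$.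
   Context: $\mathcal{U}$ is the space of real sequences $\mathbf u=(u_\ell)_{\ell\in\mathbb{Z}}$ with $u_{\ell+2N}=u_\ell$ and $\sum_{\ell=-N+1}^{N}u_\ell=0$; $(\mathbf y_F)_\ell=F\epsilon\ell$. For a sequence $\mathbf v$, $v'_\ell=(v_\ell-v_{\ell-1})/\epsilon$, $v''_\ell=(v'_\ell-v'_{\ell-1})/\epsilon$. $\|\mathbf v\|_{\ell^2_\epsilon}=(\epsilon\sum_{\ell=-N+1}^N v_\ell^2)^{1/2}$. $\mu_\epsilon:=\inf_{\Psi\in\mathcal U\setminus\{\mathbf 0\}}\|\Psi''\|_{\ell^2_\epsilon}/\|\Psi'\|_{\ell^2_\epsilon}$, which equals $2\sin(\pi\epsilon/2)/\epsilon$. *)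

theory Defs
  imports "HOL-Analysis.Analysis"
begin

definition perU :: "nat \<Rightarrow> (int \<Rightarrow> real) set" where
  "perU N = {u. (\<forall>l. u (l + 2 * int N) = u l) \<and> (\<Sum>l=-int N+1..int N. u l) = 0}"

definition dq :: "real \<Rightarrow> (int \<Rightarrow> real) \<Rightarrow> (int \<Rightarrow> real)" where
  "dq eps v = (\<lambda>l. (v l - v (l - 1)) / eps)"

definition l2eps :: "nat \<Rightarrow> (int \<Rightarrow> real) \<Rightarrow> real" where
  "l2eps N v = sqrt ((1 / real N) * (\<Sum>l=-int N+1..int N. (v l)^2))"

definition mu_eps :: "nat \<Rightarrow> real" where
  "mu_eps N = Inf {l2eps N (dq (1 / real N) (dq (1 / real N) \<Psi>)) / l2eps N (dq (1 / real N) \<Psi>)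
                   | \<Psi>. \<Psi> \<in> perU N \<and> \<Psi> \<noteq> (\<lambda>_. 0)}"

text \<open>Stability of y_F for the s-th nearest neighbour atomistic model, where
  phi2 k stands for phi''(kF).\<close>
definition atom_stable :: "(nat \<Rightarrow> real) \<Rightarrow> nat \<Rightarrow> nat \<Rightarrow> bool" where
  "atom_stable phi2 N s \<longleftrightarrow>
     (\<forall>u \<in> perU N. u \<noteq> (\<lambda>_. 0) \<longrightarrow>
        (1 / real N) * (\<Sum>l=-int N+1..int N. \<Sum>k=1..s.
            phi2 k * (\<Sum>j=0..<k. dq (1 / real N) u (l + int j))^2) > 0)"

end

theory Submission
  imports Defs
begin



definition wsum :: "nat \<Rightarrow> int \<Rightarrow> (int \<Rightarrow> real) \<Rightarrow> real" where
  "wsum p a g = (\<Sum>i<p. g (a + int i))"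

definition periodic :: "nat \<Rightarrow> (int \<Rightarrow> real) \<Rightarrow> bool" where
  "periodic p g \<longleftrightarrow> (\<forall>l. g (l + int p) = g l)"

lemma wsum_step:
  assumes "periodic p g" shows "wsum p (a+1) g = wsum p a g"
proof -
  have "(\<Sum>i<Suc p. g (a + int i)) = g a + (\<Sum>i<p. g (a + 1 + int i))"
    by (subst sum.lessThan_Suc_shift) (simp add: algebra_simps)
  moreover have "(\<Sum>i<Suc p. g (a + int i)) = (\<Sum>i<p. g (a + int i)) + g (a + int p)"
    by simp
  moreover have "g (a + int p) = g a" using assms by (simp add: periodic_def)
  ultimately show ?thesis unfolding wsum_def by linarith
qed

lemma wsum_shift:
  assumes "periodic p g" shows "wsum p a g = wsum p b g"
proof -
  have "\<And>a. wsum p a g = wsum p 0 g"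
  proof -
    fix a :: int
    show "wsum p a g = wsum p 0 g"
    proof (induct a rule: int_induct[where k=0])
      case base then show ?case by simp
    next
      case (step1 i) then show ?case using wsum_step[OF assms, of i] by simp
    next
      case (step2 i) then show ?case using wsum_step[OF assms, of "i-1"] by simp
    qed
  qed
  then show ?thesis by metis
qed

lemma periodic_mult:
  assumes "periodic p g" shows "g (l + int p * k) = g l"
proof (induct k rule: int_induct[where k=0])
  case base then show ?case by simp
next
  case (step1 i)
  have "g (l + int p * (i+1)) = g (l + int p * i + int p)" by (simp add: algebra_simps)
  also have "\<dots> = g (l + int p * i)" using assms by (simp add: periodic_def)
  finally show ?case using step1 by simp
next
  case (step2 i)
  have "g (l + int p * i) = g (l + int p * (i - 1) + int p)" by (simp add: algebra_simps)
  also have "\<dots> = g (l + int p * (i - 1))" using assms by (simp add: periodic_def)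
  finally show ?case using step2 by simp
qed

lemma periodic_rep:
  assumes "periodic p g" "p > 0"
  shows "\<exists>i<p. g l = g (a + int i)"
proof -
  define r where "r = (l - a) mod int p"
  define q where "q = (l - a) div int p"
  have r: "0 \<le> r" "r < int p" using assms(2) by (auto simp: r_def)
  have l: "l = (a + r) + int p * q" unfolding r_def q_def
    by (metis add.commute add.left_commute diff_add_cancel mod_mult_div_eq)
  have "g l = g (a + r)" using l periodic_mult[OF assms(1), of "a+r" q] by simp
  moreover have "r = int (nat r)" using r by simp
  ultimately show ?thesis using r by (intro exI[of _ "nat r"]) auto
qed

lemma period_sum:
  "(\<Sum>l=-int N+1..int N. f l) = wsum (2*N) (-int N+1) f"
proof -
  have "{-int N+1..int N} = (\<lambda>i. -int N+1+int i) ` {..<2*N}"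
  proof
    show "{-int N+1..int N} \<subseteq> (\<lambda>i. -int N+1+int i) ` {..<2*N}"
    proof
      fix l assume "l \<in> {-int N+1..int N}"
      then have "l = -int N+1+int (nat (l + int N - 1))" "nat (l + int N - 1) < 2*N" by auto
      then show "l \<in> (\<lambda>i. -int N+1+int i) ` {..<2*N}" by blast
    qed
  qed auto
  moreover have "inj_on (\<lambda>i. -int N+1+int i) {..<2*N}" by (auto simp: inj_on_def)
  ultimately show ?thesis unfolding wsum_def by (simp add: sum.reindex)
qed




lemma wsum_add: "wsum p a (\<lambda>l. f l + g l) = wsum p a f + wsum p a g"
  by (simp add: wsum_def sum.distrib)
lemma wsum_diff: "wsum p a (\<lambda>l. f l - g l) = wsum p a f - wsum p a g"
  by (simp add: wsum_def sum_subtractf)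
lemma wsum_cmult: "wsum p a (\<lambda>l. c * f l) = c * wsum p a f"
  by (simp add: wsum_def sum_distrib_left)
lemma wsum_sum: "wsum p a (\<lambda>l. \<Sum>j\<in>J. f j l) = (\<Sum>j\<in>J. wsum p a (f j))"
  unfolding wsum_def by (rule sum.swap)
lemma wsum_mono: "(\<And>l. f l \<le> g l) \<Longrightarrow> wsum p a f \<le> wsum p a g"
  unfolding wsum_def by (rule sum_mono) auto
lemma wsum_nonneg: "(\<And>l. 0 \<le> f l) \<Longrightarrow> 0 \<le> wsum p a f"
  unfolding wsum_def by (rule sum_nonneg) auto

lemma wsum_trans:
  assumes "periodic p g" shows "wsum p a (\<lambda>l. g (l + c)) = wsum p a g"
proof -
  have "wsum p a (\<lambda>l. g (l + c)) = wsum p (a + c) g"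
    unfolding wsum_def by (simp add: algebra_simps)
  also have "\<dots> = wsum p a g" by (rule wsum_shift[OF assms])
  finally show ?thesis .
qed

lemma periodic_comp2:
  assumes "periodic p w" shows "periodic p (\<lambda>l. F (w (l + c)) (w (l + d)))"
proof -
  have "\<And>l. w (l + c + int p) = w (l + c)" "\<And>l. w (l + d + int p) = w (l + d)"
    using assms unfolding periodic_def by blast+
  then show ?thesis unfolding periodic_def by (simp add: algebra_simps)
qed

definition "RR p a w j = wsum p a (\<lambda>l. w l * w (l + int j))"
definition "SS p a w k = wsum p a (\<lambda>l. (\<Sum>j<k. w (l + int j))^2)"
definition "DD p a w j = wsum p a (\<lambda>l. (w (l + int j) - w l)^2)"

context
  fixes p :: nat and a :: int and w :: "int \<Rightarrow> real"
  assumes per: "periodic p w"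
begin


lemma sq_shift: "wsum p a (\<lambda>l. (w (l + c))^2) = RR p a w 0"
proof -
  have "wsum p a (\<lambda>l. (w (l + c))^2) = wsum p a (\<lambda>l. (w (l + 0))^2)"
    using wsum_trans[OF periodic_comp2[OF per, of "\<lambda>x y. x^2" 0 0], of a c] by simp
  then show ?thesis by (simp add: RR_def power2_eq_square)
qed

lemma cross_shift:
  assumes "j < k" shows "wsum p a (\<lambda>l. w (l + int j) * w (l + int k)) = RR p a w (k - j)"
proof -
  have "wsum p a (\<lambda>l. w (l + int j) * w (l + int k)) =
        wsum p a (\<lambda>l. w (l + int j) * w (l + int j + int (k - j)))"
    using assms by (simp add: algebra_simps of_nat_diff)
  also have "\<dots> = wsum p a (\<lambda>l. w (l + 0) * w (l + int (k - j)))"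
    using wsum_trans[OF periodic_comp2[OF per, of "\<lambda>x y. x * y" 0 "int (k-j)"], of a "int j"]
    by (simp add: algebra_simps)
  finally show ?thesis by (simp add: RR_def)
qed

lemma SS_formula: "SS p a w k = 2 * (\<Sum>j<k. (real k - real j) * RR p a w j) - real k * RR p a w 0"
proof (induct k)
  case 0 then show ?case by (simp add: SS_def wsum_def)
next
  case (Suc k)
  have "SS p a w (Suc k) = wsum p a (\<lambda>l. (\<Sum>j<k. w (l + int j))^2
          + 2 * (\<Sum>j<k. w (l + int j) * w (l + int k)) + (w (l + int k))^2)"
    unfolding SS_def by (simp add: power2_eq_square algebra_simps sum_distrib_left sum_distrib_right)
  also have "\<dots> = SS p a w k + 2 * (\<Sum>j<k. RR p a w (k - j)) + RR p a w 0"
    by (simp add: wsum_add wsum_cmult wsum_sum cross_shift sq_shift SS_def)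
  also have "(\<Sum>j<k. RR p a w (k - j)) = (\<Sum>j<k. RR p a w (Suc j))"
  proof -
    have "(\<Sum>j<k. RR p a w (k - j)) = (\<Sum>j<k. RR p a w (Suc (k - Suc j)))"
      by (rule sum.cong) (auto simp: Suc_diff_Suc)
    also have "\<dots> = (\<Sum>j<k. RR p a w (Suc j))"
      by (rule sum.nat_diff_reindex[where g="\<lambda>j. RR p a w (Suc j)"])
    finally show ?thesis .
  qed
  also have "(\<Sum>j<k. RR p a w (Suc j)) = (\<Sum>j<Suc k. RR p a w j) - RR p a w 0"
    unfolding sum.lessThan_Suc_shift by simp
  finally have e: "SS p a w (Suc k) = SS p a w k + 2 * (\<Sum>j<Suc k. RR p a w j) - RR p a w 0" by simp
  have "(\<Sum>j<Suc k. (real (Suc k) - real j) * RR p a w j) =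
        (\<Sum>j<Suc k. (real k - real j) * RR p a w j) + (\<Sum>j<Suc k. RR p a w j)"
    by (subst sum.distrib[symmetric]) (rule sum.cong, auto simp: algebra_simps)
  also have "(\<Sum>j<Suc k. (real k - real j) * RR p a w j) = (\<Sum>j<k. (real k - real j) * RR p a w j)"
    by simp
  finally show ?case using e Suc by (simp add: algebra_simps)
qed

lemma DD_formula: "DD p a w j = 2 * RR p a w 0 - 2 * RR p a w j"
proof -
  have "DD p a w j = wsum p a (\<lambda>l. (w (l + int j))^2) - 2 * RR p a w j + RR p a w 0"
    unfolding DD_def RR_def
    by (simp add: power2_eq_square algebra_simps wsum_add wsum_diff wsum_cmult[symmetric])
  then show ?thesis using sq_shift by simp
qed

lemma sum_j: "(\<Sum>j<k. real j) = real k * (real k - 1) / 2"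
  by (induct k) (auto simp: field_simps)

lemma sum_kj: "(\<Sum>j<k. (real k - real j)) = real k * (real k + 1) / 2"
  by (simp add: sum_subtractf sum_j field_simps)

lemma SS_DD: "SS p a w k = (real k)^2 * RR p a w 0 - (\<Sum>j<k. (real k - real j) * DD p a w j)"
proof -
  define X where "X = (\<Sum>j<k. (real k - real j) * RR p a w j)"
  have "(\<Sum>j<k. (real k - real j) * DD p a w j) =
       (\<Sum>j<k. 2 * RR p a w 0 * (real k - real j) - 2 * ((real k - real j) * RR p a w j))"
    by (rule sum.cong) (auto simp: DD_formula algebra_simps)
  also have "\<dots> = 2 * RR p a w 0 * (\<Sum>j<k. (real k - real j)) - 2 * X"
    unfolding X_def by (subst sum_subtractf) (simp only: sum_distrib_left)
  also have "\<dots> = RR p a w 0 * (real k * (real k + 1)) - 2 * X"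
    by (subst sum_kj) simp
  finally have e: "(\<Sum>j<k. (real k - real j) * DD p a w j) = RR p a w 0 * (real k * (real k + 1)) - 2 * X" .
  have f: "SS p a w k = 2 * X - real k * RR p a w 0" unfolding X_def by (rule SS_formula)
  show ?thesis unfolding e f by (simp add: algebra_simps power2_eq_square)
qed

lemma DD_nonneg: "0 \<le> DD p a w j" unfolding DD_def by (rule wsum_nonneg) simp

lemma DD_le: "DD p a w j \<le> (real j)^2 * DD p a w 1"
proof -
  let ?d = "\<lambda>m. w (m + 1) - w m"
  have tel: "w (l + int j) - w l = (\<Sum>i<j. ?d (l + int i))" for l
  proof -
    have "(\<Sum>i<j. w (l + int (Suc i)) - w (l + int i)) = w (l + int j) - w (l + int 0)"
      by (rule sum_lessThan_telescope)
    then show ?thesis by (simp add: algebra_simps)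
  qed
  have "DD p a w j = wsum p a (\<lambda>l. (\<Sum>i<j. ?d (l + int i))^2)" unfolding DD_def tel ..
  also have "\<dots> \<le> wsum p a (\<lambda>l. real j * (\<Sum>i<j. (?d (l + int i))^2))"
    by (rule wsum_mono) (use sum_squared_le_sum_of_squares[of "\<lambda>i. ?d (_ + int i)" "{..<j}"] in
        \<open>simp add: mult.commute\<close>)
  also have "\<dots> = real j * (\<Sum>i<j. wsum p a (\<lambda>l. (?d (l + int i))^2))"
    by (simp add: wsum_cmult wsum_sum)
  also have "(\<Sum>i<j. wsum p a (\<lambda>l. (?d (l + int i))^2)) = (\<Sum>i<j. DD p a w 1)"
  proof (rule sum.cong)
    fix i
    have "wsum p a (\<lambda>l. (?d (l + int i))^2) = wsum p a (\<lambda>l. (w (l + int i + 1) - w (l + int i + 0))^2)"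
      by simp
    also have "\<dots> = wsum p a (\<lambda>l. (w (l + 1) - w (l + 0))^2)"
      by (rule wsum_trans[OF periodic_comp2[OF per, of "\<lambda>x y. (x - y)^2" 1 0]])
    finally show "wsum p a (\<lambda>l. (?d (l + int i))^2) = DD p a w 1" by (simp add: DD_def)
  qed simp
  finally show ?thesis by (simp add: power2_eq_square)
qed

lemma sum_sq: "(\<Sum>j<k. (real j)^2) = real k * (real k - 1) * (2 * real k - 1) / 6"
  by (induct k) (auto simp: field_simps power2_eq_square)

lemma sum_kj2: "(\<Sum>j<k. (real k - real j) * (real j)^2) = ((real k)^4 - (real k)^2) / 12"
proof (induct k)
  case (Suc k)
  have "(\<Sum>j<Suc k. (real (Suc k) - real j) * (real j)^2) =
     (\<Sum>j<Suc k. (real k - real j) * (real j)^2) + (\<Sum>j<Suc k. (real j)^2)"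
    by (simp add: sum.distrib[symmetric] algebra_simps)
  also have "(\<Sum>j<Suc k. (real k - real j) * (real j)^2) = (\<Sum>j<k. (real k - real j) * (real j)^2)"
    by simp
  finally show ?case using Suc sum_sq[of "Suc k"] by (simp add: field_simps power2_eq_square power4_eq_xxxx)
qed simp

lemma SS_lower: "SS p a w k \<ge> (real k)^2 * RR p a w 0 - ((real k)^4 - (real k)^2) / 12 * DD p a w 1"
proof -
  have "(\<Sum>j<k. (real k - real j) * DD p a w j) \<le> (\<Sum>j<k. (real k - real j) * ((real j)^2 * DD p a w 1))"
    by (rule sum_mono, rule mult_left_mono, rule DD_le) auto
  also have "\<dots> = ((real k)^4 - (real k)^2) / 12 * DD p a w 1"
    using sum_kj2[of k] by (simp add: sum_distrib_right[symmetric] mult.assoc[symmetric])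
  finally show ?thesis using SS_DD by simp
qed

lemma SS_upper: "SS p a w k \<le> (real k)^2 * RR p a w 0 - (real k - 1) * DD p a w 1"
proof (cases "k \<ge> 2")
  case True
  have "(real k - 1) * DD p a w 1 = (real k - real 1) * DD p a w 1" by simp
  also have "\<dots> \<le> (\<Sum>j<k. (real k - real j) * DD p a w j)"
    by (rule member_le_sum[of 1 "{..<k}" "\<lambda>j. (real k - real j) * DD p a w j"])
       (use True in \<open>auto intro!: mult_nonneg_nonneg DD_nonneg\<close>)
  finally show ?thesis using SS_DD by simp
next
  case False
  then have "k = 0 \<or> k = 1" by auto
  then show ?thesis using SS_DD[of k] DD_nonneg[of 1] DD_nonneg[of 0] by auto
qed

end



lemma coord_cont [continuous_intros]: "continuous_on S (\<lambda>x::int \<Rightarrow> real. x i)"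
  by (rule continuous_on_subset[OF continuous_on_product_coordinates]) simp

definition KK :: "nat \<Rightarrow> int \<Rightarrow> (int \<Rightarrow> real) set" where
  "KK p a = {\<Psi>. periodic p \<Psi> \<and> wsum p a \<Psi> = 0 \<and> wsum p a (\<lambda>l. (\<Psi> l)^2) = 1}"

lemma compact_box: "compact (Pi\<^sub>E UNIV (\<lambda>_::int. {-1..1::real}))"
proof -
  have "compactin (product_topology (\<lambda>_. euclidean) UNIV) (Pi\<^sub>E UNIV (\<lambda>_::int. {-1..1::real}))"
    by (subst compactin_PiE) auto
  then show ?thesis by (simp add: euclidean_product_topology)
qed

lemma closed_KK: "closed (KK p a)"
proof -
  have "KK p a = {\<Psi>. \<forall>l. \<Psi> (l + int p) = \<Psi> l} \<inter> {\<Psi>. wsum p a \<Psi> = 0}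
     \<inter> {\<Psi>. wsum p a (\<lambda>l. (\<Psi> l)^2) = 1}"
    by (auto simp: KK_def periodic_def)
  moreover have "closed {\<Psi>::int\<Rightarrow>real. \<forall>l. \<Psi> (l + int p) = \<Psi> l}"
    by (intro closed_Collect_all closed_Collect_eq continuous_intros)
  moreover have "closed {\<Psi>. wsum p a \<Psi> = 0}"
    unfolding wsum_def by (intro closed_Collect_eq continuous_intros)
  moreover have "closed {\<Psi>. wsum p a (\<lambda>l. (\<Psi> l)^2) = 1}"
    unfolding wsum_def by (intro closed_Collect_eq continuous_intros)
  ultimately show ?thesis by (simp add: closed_Int)
qed

lemma KK_box:
  assumes "p > 0" shows "KK p a \<subseteq> Pi\<^sub>E UNIV (\<lambda>_::int. {-1..1::real})"
proof
  fix \<Psi> assume K: "\<Psi> \<in> KK p a"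
  have "\<Psi> l \<in> {-1..1}" for l
  proof -
    obtain i where i: "i < p" "\<Psi> l = \<Psi> (a + int i)"
      using periodic_rep[of p \<Psi> l a] K assms by (auto simp: KK_def)
    have "(\<Psi> (a + int i))^2 \<le> wsum p a (\<lambda>l. (\<Psi> l)^2)"
      unfolding wsum_def using i(1)
      by (intro member_le_sum[of i "{..<p}" "\<lambda>i. (\<Psi> (a + int i))^2"]) auto
    then have "(\<Psi> l)^2 \<le> 1" using K i by (simp add: KK_def)
    then show ?thesis by (simp add: abs_square_le_1 abs_le_iff)
  qed
  then show "\<Psi> \<in> Pi\<^sub>E UNIV (\<lambda>_::int. {-1..1::real})" by auto
qed

lemma compact_KK: assumes "p > 0" shows "compact (KK p a)"
proof -
  have "KK p a = Pi\<^sub>E UNIV (\<lambda>_::int. {-1..1::real}) \<inter> KK p a" using KK_box[OF assms] by blast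
  then show ?thesis using compact_Int_closed[OF compact_box closed_KK] by metis
qed




lemma periodic_dq: "periodic p u \<Longrightarrow> periodic p (dq e u)"
  unfolding periodic_def dq_def
  by (metis (no_types, opaque_lifting) add.commute add_diff_eq)

lemma dq_scale: "dq e (\<lambda>l. c * u l) = (\<lambda>l. c * dq e u l)"
  unfolding dq_def by (auto simp: algebra_simps)

lemma RR_scale: "RR p a (\<lambda>l. c * w l) j = c^2 * RR p a w j"
  unfolding RR_def wsum_def by (simp add: sum_distrib_left power2_eq_square algebra_simps)

lemma DD_scale: "DD p a (\<lambda>l. c * w l) j = c^2 * DD p a w j"
  unfolding DD_def wsum_def
  by (simp add: sum_distrib_left power2_eq_square algebra_simps)

definition gfun :: "nat \<Rightarrow> int \<Rightarrow> real \<Rightarrow> (int \<Rightarrow> real) \<Rightarrow> real" where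
  "gfun p a e u = DD p a (dq e u) 1 / RR p a (dq e u) 0"

lemma gfun_scale: "c \<noteq> 0 \<Longrightarrow> gfun p a e (\<lambda>l. c * u l) = gfun p a e u"
  unfolding gfun_def dq_scale RR_scale DD_scale by simp

lemma RR_pos:
  assumes per: "periodic p u" and p: "p > 0" and e: "e \<noteq> 0" and s0: "wsum p a u = 0"
    and nz: "u \<noteq> (\<lambda>_. 0)"
  shows "0 < RR p a (dq e u) 0"
proof -
  have ge: "0 \<le> RR p a (dq e u) 0" unfolding RR_def wsum_def by (auto intro: sum_nonneg)
  show ?thesis
  proof (rule ccontr)
    assume "\<not> 0 < RR p a (dq e u) 0"
    then have "RR p a (dq e u) 0 = 0" using ge by simp
    then have "(\<Sum>i<p. (dq e u (a + int i))^2) = 0"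
      unfolding RR_def wsum_def by (simp add: power2_eq_square)
    then have z: "\<forall>i\<in>{..<p}. (dq e u (a + int i))^2 = 0"
      by (subst (asm) sum_nonneg_eq_0_iff) auto
    have step: "u (a + int i) = u (a + int i - 1)" if "i < p" for i
      using z that e by (auto simp: dq_def)
    have c: "i \<le> p \<Longrightarrow> u (a - 1 + int i) = u (a - 1)" for i
    proof (induct i)
      case (Suc i)
      then have "u (a - 1 + int (Suc i)) = u (a + int i)" by (simp add: algebra_simps)
      also have "\<dots> = u (a + int i - 1)" using step Suc by simp
      also have "\<dots> = u (a - 1 + int i)" by (simp add: algebra_simps)
      finally show ?case using Suc by simp
    qed simp
    have all: "u l = u (a - 1)" for l
    proof -
      obtain i where "i < p" "u l = u (a - 1 + int i)" using periodic_rep[OF per p] by blast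
      then show ?thesis using c by simp
    qed
    have "wsum p a u = real p * u (a - 1)"
    proof -
      have "wsum p a u = (\<Sum>i<p. u (a - 1))" unfolding wsum_def by (intro sum.cong refl) (rule all)
      then show ?thesis by simp
    qed
    then have "u (a - 1) = 0" using s0 p by simp
    then have "u = (\<lambda>_. 0)" using all by auto
    then show False using nz by simp
  qed
qed

definition alt :: "nat \<Rightarrow> int \<Rightarrow> real" where
  "alt p l = (if even l then 1 else -1) / sqrt (real p)"

lemma alt_KK:
  assumes "p > 0" "even p" shows "alt p \<in> KK p a"
proof -
  have per: "periodic p (alt p)" using assms(2) unfolding periodic_def alt_def by auto
  have neg: "alt p (l + 1) = - alt p l" for l by (simp add: alt_def)
  have "wsum p (a+1) (alt p) = - wsum p a (alt p)"
    unfolding wsum_def by (simp add: neg[symmetric] algebra_simps sum_negf[symmetric])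
  moreover have "wsum p (a+1) (alt p) = wsum p a (alt p)" by (rule wsum_shift[OF per])
  ultimately have s: "wsum p a (alt p) = 0" by simp
  have sq1: "\<And>P. (if P then 1 else -1::real)^2 = 1" by simp
  have "wsum p a (\<lambda>l. (alt p l)^2) = (\<Sum>i<p. 1 / real p)"
    unfolding wsum_def alt_def using assms(1) by (simp add: power_divide sq1 del: power2_minus)
  then have q: "wsum p a (\<lambda>l. (alt p l)^2) = 1" using assms(1) by simp
  show ?thesis using per s q by (simp add: KK_def)
qed

lemma KK_nz: "\<Psi> \<in> KK p a \<Longrightarrow> \<Psi> \<noteq> (\<lambda>_. 0)"
  by (auto simp: KK_def wsum_def)

lemma gfun_cont:
  assumes "p > 0" "e \<noteq> 0"
  shows "continuous_on (KK p a) (gfun p a e)"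
proof -
  have nz: "\<forall>\<Psi>\<in>KK p a. RR p a (dq e \<Psi>) 0 \<noteq> 0"
    using RR_pos[OF _ assms(1,2)] KK_nz by (fastforce simp: KK_def)
  have c1: "continuous_on (KK p a) (\<lambda>\<Psi>. RR p a (dq e \<Psi>) 0)"
    unfolding RR_def wsum_def dq_def using assms(2) by (intro continuous_intros) auto
  have c2: "continuous_on (KK p a) (\<lambda>\<Psi>. DD p a (dq e \<Psi>) 1)"
    unfolding DD_def wsum_def dq_def using assms(2) by (intro continuous_intros) auto
  show ?thesis unfolding gfun_def by (rule continuous_on_divide[OF c2 c1 nz])
qed

lemma attain:
  assumes "p > 0" "even p" "e \<noteq> 0"
  shows "\<exists>\<Psi>0\<in>KK p a. \<forall>u. periodic p u \<and> wsum p a u = 0 \<and> u \<noteq> (\<lambda>_. 0)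
            \<longrightarrow> gfun p a e \<Psi>0 \<le> gfun p a e u"
proof -
  obtain \<Psi>0 where P0: "\<Psi>0 \<in> KK p a" "\<forall>y\<in>KK p a. gfun p a e \<Psi>0 \<le> gfun p a e y"
    using continuous_attains_inf[OF compact_KK[OF assms(1)] _ gfun_cont[OF assms(1,3)]]
      alt_KK[OF assms(1,2)] by blast
  have "gfun p a e \<Psi>0 \<le> gfun p a e u"
    if u: "periodic p u" "wsum p a u = 0" "u \<noteq> (\<lambda>_. 0)" for u
  proof -
    obtain l where l: "u l \<noteq> 0" using u(3) by auto
    obtain i where i: "i < p" "u l = u (a + int i)" using periodic_rep[OF u(1) assms(1)] by blast
    define n where "n = sqrt (wsum p a (\<lambda>l. (u l)^2))"
    have "0 < (u (a + int i))^2" using l i by simp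
    also have "\<dots> \<le> wsum p a (\<lambda>l. (u l)^2)"
      unfolding wsum_def using i(1)
      by (intro member_le_sum[of i "{..<p}" "\<lambda>i. (u (a + int i))^2"]) auto
    finally have wpos: "0 < wsum p a (\<lambda>l. (u l)^2)" .
    then have npos: "0 < n" unfolding n_def by simp
    define v where "v = (\<lambda>l. (1/n) * u l)"
    have "v \<in> KK p a"
    proof -
      have "periodic p v" using u(1) by (simp add: periodic_def v_def)
      moreover have "wsum p a v = 0" unfolding v_def wsum_cmult u(2) by simp
      moreover have "wsum p a (\<lambda>l. (v l)^2) = 1"
      proof -
        have "wsum p a (\<lambda>l. (v l)^2) = (1/n)^2 * wsum p a (\<lambda>l. (u l)^2)"
          unfolding v_def power_mult_distrib by (rule wsum_cmult)
        also have "wsum p a (\<lambda>l. (u l)^2) = n^2"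
          unfolding n_def using wpos by simp
        finally show ?thesis using npos by (simp add: power_divide)
      qed
      ultimately show ?thesis by (simp add: KK_def)
    qed
    then have "gfun p a e \<Psi>0 \<le> gfun p a e v" using P0 by blast
    also have "gfun p a e v = gfun p a e u" unfolding v_def using npos by (intro gfun_scale) simp
    finally show ?thesis .
  qed
  then show ?thesis using P0 by blast
qed




lemma Q_bounds:
  fixes \<phi> :: "nat \<Rightarrow> real"
  assumes per: "periodic p w" and neg: "\<forall>k\<in>{2..s}. \<phi> k \<le> 0"
  shows "(\<Sum>k=1..s. \<phi> k * SS p a w k) \<ge>
           (\<Sum>k=1..s. (real k)^2 * \<phi> k) * RR p a w 0 - (\<Sum>k=1..s. (real k - 1) * \<phi> k) * DD p a w 1"
    and "(\<Sum>k=1..s. \<phi> k * SS p a w k) \<le>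
           (\<Sum>k=1..s. (real k)^2 * \<phi> k) * RR p a w 0
             - (\<Sum>k=1..s. ((real k)^4 - (real k)^2) / 12 * \<phi> k) * DD p a w 1"
proof -
  have S1: "SS p a w 1 = RR p a w 0"
    using SS_upper[OF per, where a=a and k=1] SS_lower[OF per, where a=a and k=1] by simp
  have "(\<Sum>k=1..s. \<phi> k * ((real k)^2 * RR p a w 0 - (real k - 1) * DD p a w 1))
     = (\<Sum>k=1..s. ((real k)^2 * \<phi> k) * RR p a w 0 - ((real k - 1) * \<phi> k) * DD p a w 1)"
    by (rule sum.cong) (auto simp: algebra_simps)
  also have "\<dots> = (\<Sum>k=1..s. (real k)^2 * \<phi> k) * RR p a w 0 - (\<Sum>k=1..s. (real k - 1) * \<phi> k) * DD p a w 1"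
    by (simp only: sum_subtractf sum_distrib_right)
  finally have "(\<Sum>k=1..s. (real k)^2 * \<phi> k) * RR p a w 0 - (\<Sum>k=1..s. (real k - 1) * \<phi> k) * DD p a w 1
      = (\<Sum>k=1..s. \<phi> k * ((real k)^2 * RR p a w 0 - (real k - 1) * DD p a w 1))" by simp
  also have "\<dots> \<le> (\<Sum>k=1..s. \<phi> k * SS p a w k)"
  proof (rule sum_mono)
    fix k assume k: "k \<in> {1..s}"
    show "\<phi> k * ((real k)^2 * RR p a w 0 - (real k - 1) * DD p a w 1) \<le> \<phi> k * SS p a w k"
    proof (cases "k = 1")
      case True then show ?thesis using S1 by simp
    next
      case False
      then have "\<phi> k \<le> 0" using neg k by auto
      then show ?thesis by (rule mult_left_mono_neg[OF SS_upper[OF per]])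
    qed
  qed
  finally show "(\<Sum>k=1..s. \<phi> k * SS p a w k) \<ge>
           (\<Sum>k=1..s. (real k)^2 * \<phi> k) * RR p a w 0 - (\<Sum>k=1..s. (real k - 1) * \<phi> k) * DD p a w 1" .
  have "(\<Sum>k=1..s. \<phi> k * SS p a w k) \<le>
     (\<Sum>k=1..s. \<phi> k * ((real k)^2 * RR p a w 0 - ((real k)^4 - (real k)^2) / 12 * DD p a w 1))"
  proof (rule sum_mono)
    fix k assume k: "k \<in> {1..s}"
    show "\<phi> k * SS p a w k \<le> \<phi> k * ((real k)^2 * RR p a w 0 - ((real k)^4 - (real k)^2) / 12 * DD p a w 1)"
    proof (cases "k = 1")
      case True then show ?thesis using S1 by simp
    next
      case False
      then have "\<phi> k \<le> 0" using neg k by auto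
      then show ?thesis by (rule mult_left_mono_neg[OF SS_lower[OF per]])
    qed
  qed
  also have "\<dots> = (\<Sum>k=1..s. ((real k)^2 * \<phi> k) * RR p a w 0 - (((real k)^4 - (real k)^2) / 12 * \<phi> k) * DD p a w 1)"
    by (rule sum.cong) (auto simp: algebra_simps)
  also have "\<dots> = (\<Sum>k=1..s. (real k)^2 * \<phi> k) * RR p a w 0
             - (\<Sum>k=1..s. ((real k)^4 - (real k)^2) / 12 * \<phi> k) * DD p a w 1"
    by (simp only: sum_subtractf sum_distrib_right)
  finally show "(\<Sum>k=1..s. \<phi> k * SS p a w k) \<le>
           (\<Sum>k=1..s. (real k)^2 * \<phi> k) * RR p a w 0
             - (\<Sum>k=1..s. ((real k)^4 - (real k)^2) / 12 * \<phi> k) * DD p a w 1" .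
qed

lemma perU_iff: "u \<in> perU N \<longleftrightarrow> periodic (2*N) u \<and> wsum (2*N) (-int N+1) u = 0"
  unfolding perU_def periodic_def period_sum by simp

lemma l2eps_w: "l2eps N v = sqrt (wsum (2*N) (-int N+1) (\<lambda>l. (v l)^2) / real N)"
  unfolding l2eps_def period_sum by simp

lemma ratio:
  assumes N: "N \<ge> 1" and u: "u \<in> perU N" "u \<noteq> (\<lambda>_. 0)"
  shows "l2eps N (dq (1/real N) (dq (1/real N) u)) / l2eps N (dq (1/real N) u)
         = real N * sqrt (gfun (2*N) (-int N+1) (1/real N) u)"
proof -
  let ?p = "2*N" and ?a = "-int N+1" and ?e = "1/real N"
  define w where "w = dq ?e u"
  have per: "periodic ?p u" "wsum ?p ?a u = 0" using u perU_iff by auto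
  have pw: "periodic ?p w" unfolding w_def by (rule periodic_dq[OF per(1)])
  have R0: "0 < RR ?p ?a w 0" unfolding w_def using RR_pos[OF per(1) _ _ per(2) u(2)] N by simp
  have Npos: "0 < real N" using N by simp
  have dqw: "dq ?e w = (\<lambda>l. real N * (w l - w (l - 1)))" unfolding dq_def by (simp add: mult.commute)
  have "wsum ?p ?a (\<lambda>l. (w l - w (l - 1))^2) = wsum ?p ?a (\<lambda>l. (w (l + -1 + 1) - w (l + -1 + 0))^2)"
    by simp
  also have "\<dots> = wsum ?p ?a (\<lambda>l. (w (l + 1) - w (l + 0))^2)"
    by (rule wsum_trans[OF periodic_comp2[OF pw, of "\<lambda>x y. (x - y)^2" 1 0]])
  finally have D1: "wsum ?p ?a (\<lambda>l. (w l - w (l - 1))^2) = DD ?p ?a w 1" by (simp add: DD_def)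
  have n1: "l2eps N (dq ?e w) = sqrt ((real N)^2 * DD ?p ?a w 1 / real N)"
    unfolding l2eps_w dqw power_mult_distrib wsum_cmult D1 ..
  have n2: "l2eps N w = sqrt (RR ?p ?a w 0 / real N)"
    unfolding l2eps_w RR_def by (simp add: power2_eq_square)
  have "l2eps N (dq ?e w) / l2eps N w = sqrt (((real N)^2 * DD ?p ?a w 1 / real N) / (RR ?p ?a w 0 / real N))"
    unfolding n1 n2 by (simp add: real_sqrt_divide)
  also have "((real N)^2 * DD ?p ?a w 1 / real N) / (RR ?p ?a w 0 / real N) = (real N)^2 * (DD ?p ?a w 1 / RR ?p ?a w 0)"
    using Npos R0 by (simp add: field_simps)
  also have "sqrt \<dots> = real N * sqrt (DD ?p ?a w 1 / RR ?p ?a w 0)"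
    by (subst real_sqrt_mult) simp
  finally show ?thesis unfolding w_def gfun_def by simp
qed




lemma stab_eq:
  "(\<Sum>l=-int N+1..int N. \<Sum>k=1..s. \<phi> k * (\<Sum>j=0..<k. w (l + int j))^2)
   = (\<Sum>k=1..s. \<phi> k * SS (2*N) (-int N+1) w k)"
  unfolding period_sum wsum_sum
  by (rule sum.cong) (simp_all add: wsum_cmult SS_def atLeast0LessThan)

lemma coef_ge: "real k \<ge> 2 \<Longrightarrow> real k - 1 \<le> ((real k)^4 - (real k)^2) / 12"
proof -
  assume k: "real k \<ge> 2"
  have "(real k)^2 \<ge> 4" using power_mono[OF k, of 2] by simp
  then have "(real k)^2 * (real k + 1) \<ge> 4 * 3" using k by (intro mult_mono) auto
  then have "(real k - 1) * ((real k)^2 * (real k + 1)) \<ge> (real k - 1) * 12" using k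
    by (intro mult_left_mono) auto
  then show ?thesis by (simp add: power2_eq_square power4_eq_xxxx algebra_simps)
qed

theorem theorem5p3:
  fixes N s :: nat and F :: real and phi :: "real \<Rightarrow> real"
  assumes "N \<ge> 1" and "s \<ge> 2" and "F > 0"
    and "\<forall>x>0. phi differentiable (at x)"
    and "\<forall>x>0. (deriv phi) differentiable (at x)"
    and "\<forall>k\<in>{2..s}. deriv (deriv phi) (real k * F) \<le> 0"
  shows "\<exists>B::real.
     (\<Sum>k=2..s. (real k - 1) * deriv (deriv phi) (real k * F)) \<ge> B \<and>
     B \<ge> deriv (deriv phi) (2 * F)
          + (\<Sum>k=3..s. ((real k)^4 - (real k)^2) / 12 * deriv (deriv phi) (real k * F)) \<and>
     (atom_stable (\<lambda>k. deriv (deriv phi) (real k * F)) N s \<longleftrightarrow>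
        (\<Sum>k=1..s. (real k)^2 * deriv (deriv phi) (real k * F))
          - (1 / real N)^2 * (mu_eps N)^2 * B > 0)"
proof -
  define \<phi> where "\<phi> = (\<lambda>k::nat. deriv (deriv phi) (real k * F))"
  define p where "p = 2 * N"
  define a where "a = -int N + 1"
  define e where "e = 1 / real N"
  have N: "N \<ge> 1" using assms(1) .
  have neg: "\<forall>k\<in>{2..s}. \<phi> k \<le> 0" using assms(6) by (simp add: \<phi>_def)
  have p0: "p > 0" "even p" using N by (auto simp: p_def)
  have e0: "e \<noteq> 0" using N by (simp add: e_def)
  define A where "A = (\<Sum>k=1..s. (real k)^2 * \<phi> k)"
  define Ub where "Ub = (\<Sum>k=1..s. (real k - 1) * \<phi> k)"
  define Lb where "Lb = (\<Sum>k=1..s. ((real k)^4 - (real k)^2) / 12 * \<phi> k)"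
  have perU': "u \<in> perU N \<longleftrightarrow> periodic p u \<and> wsum p a u = 0" for u
    by (simp add: perU_iff p_def a_def)
  obtain \<Psi>0 where P0: "\<Psi>0 \<in> KK p a"
    "\<And>u. periodic p u \<Longrightarrow> wsum p a u = 0 \<Longrightarrow> u \<noteq> (\<lambda>_. 0) \<Longrightarrow> gfun p a e \<Psi>0 \<le> gfun p a e u"
    using attain[OF p0 e0, of a] by blast
  define g0 where "g0 = gfun p a e \<Psi>0"
  have P0U: "\<Psi>0 \<in> perU N" "\<Psi>0 \<noteq> (\<lambda>_. 0)" using P0(1) KK_nz by (auto simp: KK_def perU')
  have RRpos: "0 < RR p a (dq e u) 0" if "u \<in> perU N" "u \<noteq> (\<lambda>_. 0)" for u
    using RR_pos[of p u e a] that p0 e0 perU' by auto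
  have DDeq: "DD p a (dq e u) 1 = gfun p a e u * RR p a (dq e u) 0" if "u \<in> perU N" "u \<noteq> (\<lambda>_. 0)" for u
    using RRpos[OF that] by (simp add: gfun_def)
  have g0nn: "0 \<le> g0"
  proof -
    have "periodic p (dq e \<Psi>0)" using P0U(1) perU' periodic_dq by blast
    then have "0 \<le> DD p a (dq e \<Psi>0) 1" by (rule DD_nonneg)
    then show ?thesis using RRpos[OF P0U] by (simp add: g0_def gfun_def)
  qed
  have mu: "mu_eps N = real N * sqrt g0"
  proof -
    have "Inf {l2eps N (dq (1 / real N) (dq (1 / real N) \<Psi>)) / l2eps N (dq (1 / real N) \<Psi>)
                   | \<Psi>. \<Psi> \<in> perU N \<and> \<Psi> \<noteq> (\<lambda>_. 0)} = real N * sqrt g0"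
    proof (rule cInf_eq_minimum)
      show "real N * sqrt g0 \<in> {l2eps N (dq (1 / real N) (dq (1 / real N) \<Psi>)) / l2eps N (dq (1 / real N) \<Psi>)
                   | \<Psi>. \<Psi> \<in> perU N \<and> \<Psi> \<noteq> (\<lambda>_. 0)}"
        using ratio[OF N P0U] P0U unfolding g0_def p_def a_def e_def
        by (intro CollectI exI[of _ \<Psi>0]) simp
    next
      fix x assume "x \<in> {l2eps N (dq (1 / real N) (dq (1 / real N) \<Psi>)) / l2eps N (dq (1 / real N) \<Psi>)
                   | \<Psi>. \<Psi> \<in> perU N \<and> \<Psi> \<noteq> (\<lambda>_. 0)}"
      then obtain \<Psi> where \<Psi>: "\<Psi> \<in> perU N" "\<Psi> \<noteq> (\<lambda>_. 0)"
        "x = l2eps N (dq (1 / real N) (dq (1 / real N) \<Psi>)) / l2eps N (dq (1 / real N) \<Psi>)" by blast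
      have "x = real N * sqrt (gfun p a e \<Psi>)" using ratio[OF N \<Psi>(1,2)] \<Psi>(3)
        unfolding p_def a_def e_def by simp
      moreover have "g0 \<le> gfun p a e \<Psi>" using P0(2)[of \<Psi>] \<Psi> perU' g0_def by blast
      ultimately show "real N * sqrt g0 \<le> x" by (simp add: mult_left_mono)
    qed
    then show ?thesis by (simp add: mu_eps_def)
  qed
  have c: "(1 / real N)^2 * (mu_eps N)^2 = g0"
    using N g0nn by (simp add: mu power_mult_distrib power_divide)
  have stab: "atom_stable \<phi> N s \<longleftrightarrow>
     (\<forall>u \<in> perU N. u \<noteq> (\<lambda>_. 0) \<longrightarrow> 0 < (\<Sum>k=1..s. \<phi> k * SS p a (dq e u) k))"
  proof -
    have Np: "0 < real N" using N by simp
    show ?thesis unfolding atom_stable_def stab_eq using Np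
      by (simp add: p_def a_def e_def zero_less_mult_iff zero_less_divide_iff)
  qed
  have bnds: "A * RR p a (dq e u) 0 - Ub * DD p a (dq e u) 1 \<le> (\<Sum>k=1..s. \<phi> k * SS p a (dq e u) k)"
    "(\<Sum>k=1..s. \<phi> k * SS p a (dq e u) k) \<le> A * RR p a (dq e u) 0 - Lb * DD p a (dq e u) 1"
    if "u \<in> perU N" for u
  proof -
    have "periodic p (dq e u)" using that perU' periodic_dq by blast
    from Q_bounds[OF this neg, of a]
    show "A * RR p a (dq e u) 0 - Ub * DD p a (dq e u) 1 \<le> (\<Sum>k=1..s. \<phi> k * SS p a (dq e u) k)"
      "(\<Sum>k=1..s. \<phi> k * SS p a (dq e u) k) \<le> A * RR p a (dq e u) 0 - Lb * DD p a (dq e u) 1"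
      unfolding A_def Ub_def Lb_def by auto
  qed
  have Ub0: "Ub \<le> 0" unfolding Ub_def
  proof (rule sum_nonpos)
    fix k assume k: "k \<in> {1..s}"
    show "(real k - 1) * \<phi> k \<le> 0"
    proof (cases "k = 1")
      case False then show ?thesis using k neg by (intro mult_nonneg_nonpos) auto
    qed simp
  qed
  have LU: "Lb \<le> Ub" unfolding Lb_def Ub_def
  proof (rule sum_mono)
    fix k assume k: "k \<in> {1..s}"
    show "((real k)^4 - (real k)^2) / 12 * \<phi> k \<le> (real k - 1) * \<phi> k"
    proof (cases "k = 1")
      case False
      then have "real k \<ge> 2" "\<phi> k \<le> 0" using k neg by auto
      then show ?thesis using coef_ge by (intro mult_right_mono_neg) auto
    qed simp
  qed
  have Ueq: "(\<Sum>k=2..s. (real k - 1) * \<phi> k) = Ub"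
    unfolding Ub_def using assms(2) by (subst sum.atLeast_Suc_atMost[of 1 s]) (auto simp: numeral_2_eq_2)
  have Leq: "\<phi> 2 + (\<Sum>k=3..s. ((real k)^4 - (real k)^2) / 12 * \<phi> k) = Lb"
  proof -
    have "Lb = 0 + (\<Sum>k=2..s. ((real k)^4 - (real k)^2) / 12 * \<phi> k)"
      unfolding Lb_def using assms(2) by (subst sum.atLeast_Suc_atMost[of 1 s]) (auto simp: numeral_2_eq_2)
    also have "(\<Sum>k=2..s. ((real k)^4 - (real k)^2) / 12 * \<phi> k)
        = \<phi> 2 + (\<Sum>k=3..s. ((real k)^4 - (real k)^2) / 12 * \<phi> k)"
      using assms(2) by (subst sum.atLeast_Suc_atMost[of 2 s]) (auto simp: numeral_3_eq_3 numeral_2_eq_2)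
    finally show ?thesis by simp
  qed
  have main: "\<exists>B. Ub \<ge> B \<and> B \<ge> Lb \<and> (atom_stable \<phi> N s \<longleftrightarrow> A - g0 * B > 0)"
  proof (cases "atom_stable \<phi> N s")
    case True
    have "0 < (\<Sum>k=1..s. \<phi> k * SS p a (dq e \<Psi>0) k)" using True stab P0U by blast
    also have "\<dots> \<le> A * RR p a (dq e \<Psi>0) 0 - Lb * DD p a (dq e \<Psi>0) 1" using bnds(2)[OF P0U(1)] .
    also have "\<dots> = RR p a (dq e \<Psi>0) 0 * (A - g0 * Lb)"
      using DDeq[OF P0U] by (simp add: g0_def algebra_simps)
    finally have "A - g0 * Lb > 0" using RRpos[OF P0U] by (simp add: zero_less_mult_iff)
    then show ?thesis using True LU by (intro exI[of _ Lb]) auto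
  next
    case False
    have "\<not> (A - g0 * Ub > 0)"
    proof
      assume pos: "A - g0 * Ub > 0"
      have "atom_stable \<phi> N s" unfolding stab
      proof (intro ballI impI)
        fix u assume u: "u \<in> perU N" "u \<noteq> (\<lambda>_. 0)"
        have gu: "g0 \<le> gfun p a e u" using P0(2)[of u] u perU' g0_def by blast
        have R: "0 < RR p a (dq e u) 0" using RRpos[OF u] .
        have "0 < RR p a (dq e u) 0 * (A - g0 * Ub)" using R pos by simp
        also have "\<dots> \<le> A * RR p a (dq e u) 0 - Ub * DD p a (dq e u) 1"
        proof -
          have "(- Ub) * (g0 * RR p a (dq e u) 0) \<le> (- Ub) * (gfun p a e u * RR p a (dq e u) 0)"
            using Ub0 gu R by (intro mult_left_mono mult_right_mono) auto
          then show ?thesis unfolding DDeq[OF u] by (simp add: algebra_simps)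
        qed
        also have "\<dots> \<le> (\<Sum>k=1..s. \<phi> k * SS p a (dq e u) k)" using bnds(1)[OF u(1)] .
        finally show "0 < (\<Sum>k=1..s. \<phi> k * SS p a (dq e u) k)" .
      qed
      then show False using False by simp
    qed
    then show ?thesis using False LU by (intro exI[of _ Ub]) auto
  qed
  then obtain B where B: "Ub \<ge> B" "B \<ge> Lb" "atom_stable \<phi> N s \<longleftrightarrow> A - g0 * B > 0" by blast
  have e1: "(\<Sum>k=2..s. (real k - 1) * deriv (deriv phi) (real k * F)) = Ub"
    using Ueq by (simp add: \<phi>_def)
  have e2: "deriv (deriv phi) (2 * F)
          + (\<Sum>k=3..s. ((real k)^4 - (real k)^2) / 12 * deriv (deriv phi) (real k * F)) = Lb"
    using Leq by (simp add: \<phi>_def)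
  have e3: "(\<Sum>k=1..s. (real k)^2 * deriv (deriv phi) (real k * F)) = A"
    by (simp add: A_def \<phi>_def)
  have e4: "atom_stable (\<lambda>k. deriv (deriv phi) (real k * F)) N s = atom_stable \<phi> N s"
    by (simp add: \<phi>_def)
  show ?thesis unfolding e1 e2 e3 e4 c using B by blast
qed


end
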